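(* Let $\beta,\sigma,\kappa,\gamma,\delta$ be parameters with $\beta,\sigma,\kappa\ge 0$, $\gamma>0$, $\kappa+\sigma>0$, $\delta>0$, and let $0\le q\le 1$. Consider the system \begin{align*} \dot{A}(t)&=q\beta \big(1-A(t)-I(t)-R(t)\big)\big(A(t)+I(t)\big)-\sigma A(t)-\kappa A(t),\\ \dot{I}(t)&=(1-q)\beta \big(1-A(t)-I(t)-R(t)\big)\big(A(t)+I(t)\big) +\sigma A(t)-\gamma I(t),\\ \dot{R}(t)&=\kappa A(t)+\gamma I(t) - \delta R(t), \end{align*} with $S(t)=1-A(t)-I(t)-R(t)$. If $$R_{0}:= \max\left( \frac{\beta}{\kappa+\gamma+\sigma},\ \frac{\beta\big(q\gamma+(1-q)\kappa+\sigma\big)}{\gamma(\kappa+\sigma)} \right) <1,$$ then the disease-free equilibrium $(S,A,I,R)=(1,0,0,0)$ is globally asymptotically stable.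
   Context: This is the single-group SAIR(S) model obtained from $\dot S=-\beta S(A+I)+\delta R$, $\dot A=q\beta S(A+I)-\sigma A-\kappa A$, $\dot I=(1-q)\beta S(A+I)+\sigma A-\gamma I$, $\dot R=\kappa A+\gamma I-\delta R$ by eliminating $S=1-A-I-R$. Here $S,A,I,R$ are the proportions of susceptible, asymptomatic-infected, symptomatic-infected and recovered individuals (so states lie in $A,I,R\ge 0$, $A+I+R\le 1$); $\beta$ is the transmission rate, $\sigma$ the asymptomatic-to-symptomatic progression rate, $\kappa,\gamma$ the recovery rates of asymptomatic and symptomatic infected, $\delta$ the rate at which immunity recedes, and $q$ the proportion of new infections that are asymptomatic. *)

theory Defs
  imports "HOL-Analysis.Analysis"
begin

definition sair_R0 :: "real \<Rightarrow> real \<Rightarrow> real \<Rightarrow> real \<Rightarrow> real \<Rightarrow> real" where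
  "sair_R0 \<beta> \<sigma> \<kappa> \<gamma> q =
     max (\<beta> / (\<kappa> + \<gamma> + \<sigma>)) (\<beta> * (q * \<gamma> + (1 - q) * \<kappa> + \<sigma>) / (\<gamma> * (\<kappa> + \<sigma>)))"

definition sair_Omega :: "(real \<times> real \<times> real) set" where
  "sair_Omega = {(a, i, r). a \<ge> 0 \<and> i \<ge> 0 \<and> r \<ge> 0 \<and> a + i + r \<le> 1}"

definition sair_solution ::
  "real \<Rightarrow> real \<Rightarrow> real \<Rightarrow> real \<Rightarrow> real \<Rightarrow> real \<Rightarrow>
   (real \<Rightarrow> real) \<Rightarrow> (real \<Rightarrow> real) \<Rightarrow> (real \<Rightarrow> real) \<Rightarrow> bool" where
  "sair_solution \<beta> \<sigma> \<kappa> \<gamma> \<delta> q A I R \<longleftrightarrow>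
     (\<forall>t\<ge>0.
        (A has_real_derivative
           (q * \<beta> * (1 - A t - I t - R t) * (A t + I t) - \<sigma> * A t - \<kappa> * A t)) (at t within {0..}) \<and>
        (I has_real_derivative
           ((1 - q) * \<beta> * (1 - A t - I t - R t) * (A t + I t) + \<sigma> * A t - \<gamma> * I t)) (at t within {0..}) \<and>
        (R has_real_derivative
           (\<kappa> * A t + \<gamma> * I t - \<delta> * R t)) (at t within {0..}))"

end

theory Submission
  imports Defs
begin


lemma prod_lb:
  fixes x y M N X Y :: real
  assumes "x \<ge> -M" "y \<ge> -N" "\<bar>x\<bar> \<le> X" "\<bar>y\<bar> \<le> Y" "M \<ge> 0" "N \<ge> 0"
  shows "x * y \<ge> -(M * Y + N * X)"
proof (cases "x \<ge> 0")
  case True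
  show ?thesis
  proof (cases "y \<ge> 0")
    case True with \<open>x\<ge>0\<close> assms show ?thesis by (smt (verit) mult_nonneg_nonneg)
  next
    case False
    have "x * y \<ge> X * (-N)"
    proof -
      have "x * (-y) \<le> X * N" using assms True False by (intro mult_mono) auto
      thus ?thesis by simp
    qed
    moreover have "M * Y \<ge> 0" using assms by (smt (verit) mult_nonneg_nonneg)
    ultimately show ?thesis by (simp add: mult.commute)
  qed
next
  case False
  show ?thesis
  proof (cases "y \<ge> 0")
    case True
    have "(-x) * y \<le> M * Y" using assms True False by (intro mult_mono) auto
    thus ?thesis using assms by (smt (verit) mult_nonneg_nonneg mult_minus_left)
  next
    case False2: False
    have "x * y \<ge> 0" using False False2 by (simp add: mult_nonpos_nonpos)
    thus ?thesis using assms by (smt (verit) mult_nonneg_nonneg)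
  qed
qed

lemma exp_mvt_bound:
  fixes f f' :: "real \<Rightarrow> real" and a t lam B :: real
  assumes "a \<le> t" "lam \<ge> 0" "lam * (t - a) \<le> 1"
    and der: "\<And>s. s \<in> {a..t} \<Longrightarrow> (f has_real_derivative f' s) (at s within {a..t})"
    and lb: "\<And>s. s \<in> {a..t} \<Longrightarrow> f' s + lam * f s \<ge> -B"
    and "B \<ge> 0" "f a \<ge> 0"
  shows "f t \<ge> -3 * B * (t - a)"
proof -
  define g where "g s = exp (lam * (s - a)) * f s" for s
  have dg: "(g has_real_derivative exp (lam * (s - a)) * (f' s + lam * f s)) (at s within {a..t})"
    if "s \<in> {a..t}" for s
    unfolding g_def
    by (rule derivative_eq_intros der that refl | simp)+ (simp add: algebra_simps)
  obtain x where x: "x \<in> {a..t}" "g t - g a = exp (lam * (x - a)) * (f' x + lam * f x) * (t - a)"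
    using mvt_very_simple[OF \<open>a \<le> t\<close>, of g "\<lambda>s. (*) (exp (lam * (s - a)) * (f' s + lam * f s))"]
      dg unfolding has_field_derivative_def by (auto simp: mult.commute)
  have e1: "exp (lam * (x - a)) \<le> 3"
  proof -
    have "lam * (x - a) \<le> 1" using x(1) assms(2,3)
      by (smt (verit) atLeastAtMost_iff mult_left_mono)
    hence "exp (lam * (x - a)) \<le> exp 1" by simp
    thus ?thesis using exp_le by linarith
  qed
  have "exp (lam * (x - a)) * (f' x + lam * f x) \<ge> exp (lam * (x - a)) * (-B)"
    using lb[OF x(1)] by (intro mult_left_mono) auto
  moreover have "exp (lam * (x - a)) * (-B) \<ge> 3 * (-B)"
    using e1 \<open>B \<ge> 0\<close> by (intro mult_right_mono_neg) auto
  ultimately have "exp (lam * (x - a)) * (f' x + lam * f x) \<ge> -3 * B" by linarith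
  hence "exp (lam * (x - a)) * (f' x + lam * f x) * (t - a) \<ge> -3 * B * (t - a)"
    using \<open>a \<le> t\<close> by (intro mult_right_mono) auto
  moreover have "g a = f a" by (simp add: g_def)
  ultimately have gt: "g t \<ge> -3 * B * (t - a)" using x(2) \<open>f a \<ge> 0\<close> by linarith
  have "f t = exp (- lam * (t - a)) * g t" by (simp add: g_def mult.assoc[symmetric] exp_add[symmetric])
  moreover have "exp (- lam * (t - a)) \<le> 1" using assms(1,2) by simp
  ultimately show ?thesis
  proof -
    assume "f t = exp (- lam * (t - a)) * g t" "exp (- lam * (t - a)) \<le> 1"
    show ?thesis
    proof (cases "g t \<ge> 0")
      case True
      have "exp (- lam * (t - a)) * g t \<ge> 0" using True by simp
      moreover have "3 * B * (t - a) \<ge> 0" using \<open>B\<ge>0\<close> \<open>a\<le>t\<close> by simp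
      ultimately show ?thesis using \<open>f t = _\<close> by linarith
    next
      case False
      have "exp (- lam * (t - a)) * g t \<ge> 1 * g t"
        using False \<open>exp (- lam * (t - a)) \<le> 1\<close> by (intro mult_right_mono_neg) auto
      thus ?thesis using gt \<open>f t = _\<close> by linarith
    qed
  qed
qed

lemma decay:
  fixes W W' :: "real \<Rightarrow> real" and mu t :: real
  assumes "t \<ge> 0"
    and der: "\<And>s. s \<ge> 0 \<Longrightarrow> (W has_real_derivative W' s) (at s within {0..})"
    and ub: "\<And>s. s \<ge> 0 \<Longrightarrow> W' s \<le> - mu * W s"
  shows "W t \<le> W 0 * exp (- mu * t)"
proof -
  define g where "g s = exp (mu * s) * W s" for s
  have dg: "(g has_real_derivative exp (mu * s) * (W' s + mu * W s)) (at s within {0..t})"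
    if "s \<in> {0..t}" for s
  proof -
    have dW: "(W has_real_derivative W' s) (at s within {0..t})"
      using der[of s] that by (auto intro: has_field_derivative_subset)
    show ?thesis unfolding g_def
      by (auto intro!: derivative_eq_intros dW simp: algebra_simps)
  qed
  obtain x where x: "x \<in> {0..t}" "g t - g 0 = exp (mu * x) * (W' x + mu * W x) * (t - 0)"
    using mvt_very_simple[OF \<open>0 \<le> t\<close>, of g "\<lambda>s. (*) (exp (mu * s) * (W' s + mu * W s))"]
      dg unfolding has_field_derivative_def by (auto simp: mult.commute)
  have "W' x + mu * W x \<le> 0" using ub[of x] x(1) by auto
  hence "exp (mu * x) * (W' x + mu * W x) * t \<le> 0"
    using \<open>t\<ge>0\<close> by (simp add: mult_nonpos_nonneg mult_nonneg_nonpos)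
  hence "g t \<le> g 0" using x(2) by simp
  hence "exp (mu * t) * W t \<le> W 0" by (simp add: g_def)
  hence "exp (-mu * t) * (exp (mu * t) * W t) \<le> exp (-mu * t) * W 0"
    by (intro mult_left_mono) auto
  thus ?thesis by (simp add: exp_minus field_simps)
qed



lemma scale_lb:
  fixes c b x P :: real
  assumes "0 \<le> c" "c \<le> b" "P \<ge> 0" "x \<ge> -P"
  shows "c * x \<ge> -(b * P)"
proof -
  have "c * x \<ge> c * (-P)" using assms by (intro mult_left_mono) auto
  moreover have "c * P \<le> b * P" using assms by (intro mult_right_mono) auto
  ultimately show ?thesis by simp
qed

lemma local_step:
  fixes \<beta> \<sigma> \<kappa> \<gamma> \<delta> q a b h K lam C :: real and A I R :: "real \<Rightarrow> real"
  assumes par: "\<beta> \<ge> 0" "\<sigma> \<ge> 0" "\<kappa> \<ge> 0" "\<gamma> \<ge> 0" "\<delta> \<ge> 0" "0 \<le> q" "q \<le> 1"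
    and ab: "0 \<le> a" "a \<le> b" "b \<le> a + h"
    and K: "K \<ge> 0"
    and lam: "lam \<ge> \<sigma> + \<kappa>" "lam \<ge> \<gamma>" "lam \<ge> \<delta>" "lam \<ge> 2 * \<beta> * K" "lam * h \<le> 1"
    and C: "C = \<beta> * (2 + 8 * K) + \<sigma> + \<kappa> + \<gamma> + \<delta> + 2 * lam" "6 * C * h \<le> 1"
    and bnd: "\<And>t. t \<in> {a..b} \<Longrightarrow> \<bar>A t\<bar> \<le> K \<and> \<bar>I t\<bar> \<le> K \<and> \<bar>R t\<bar> \<le> K"
    and sol: "sair_solution \<beta> \<sigma> \<kappa> \<gamma> \<delta> q A I R"
    and init: "A a \<ge> 0" "I a \<ge> 0" "R a \<ge> 0" "1 - A a - I a - R a \<ge> 0"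
    and t: "t \<in> {a..b}"
  shows "A t \<ge> 0 \<and> I t \<ge> 0 \<and> R t \<ge> 0 \<and> 1 - A t - I t - R t \<ge> 0"
proof -
  define S where "S t = 1 - A t - I t - R t" for t
  define dA where "dA t = q * \<beta> * (1 - A t - I t - R t) * (A t + I t) - \<sigma> * A t - \<kappa> * A t" for t
  define dI where "dI t = (1 - q) * \<beta> * (1 - A t - I t - R t) * (A t + I t) + \<sigma> * A t - \<gamma> * I t" for t
  define dR where "dR t = \<kappa> * A t + \<gamma> * I t - \<delta> * R t" for t
  define dS where "dS t = - (dA t + dI t + dR t)" for t
  have h0: "h \<ge> 0" using ab by linarith
  have derA: "(A has_real_derivative dA s) (at s within {a..b})"
   and derI: "(I has_real_derivative dI s) (at s within {a..b})"
   and derR: "(R has_real_derivative dR s) (at s within {a..b})"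
   if "s \<in> {a..b}" for s
  proof -
    have "s \<ge> 0" "{a..b} \<subseteq> {0..}" using that ab by auto
    thus "(A has_real_derivative dA s) (at s within {a..b})"
      "(I has_real_derivative dI s) (at s within {a..b})"
      "(R has_real_derivative dR s) (at s within {a..b})"
      using sol unfolding sair_solution_def dA_def dI_def dR_def
      by (meson has_field_derivative_subset)+
  qed
  have derS: "(S has_real_derivative dS s) (at s within {a..b})" if "s \<in> {a..b}" for s
    unfolding S_def dS_def
    by (auto intro!: derivative_eq_intros derA[OF that] derI[OF that] derR[OF that])
  define neg where "neg t = max 0 (max (- A t) (max (- I t) (max (- R t) (- S t))))" for t
  define M where "M = Sup (neg ` {a..b})"
  have negb: "neg s \<le> 1 + 3 * K" if "s \<in> {a..b}" for s
    using bnd[OF that] K unfolding neg_def S_def by auto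
  have bdd: "bdd_above (neg ` {a..b})" using negb by (auto intro!: bdd_aboveI2[where M="1 + 3 * K"])
  have negM: "neg s \<le> M" if "s \<in> {a..b}" for s
    unfolding M_def using bdd that by (auto intro!: cSup_upper)
  have M0: "M \<ge> 0" using negM[of a] ab unfolding neg_def by auto
  have key: "dA s + lam * A s \<ge> -(C * M) \<and> dI s + lam * I s \<ge> -(C * M) \<and>
             dR s + lam * R s \<ge> -(C * M) \<and> dS s + lam * S s \<ge> -(C * M)" if s: "s \<in> {a..b}" for s
  proof -
    have lbs: "A s \<ge> -M" "I s \<ge> -M" "R s \<ge> -M" "S s \<ge> -M" using negM[OF s] unfolding neg_def by auto
    have bs: "\<bar>A s\<bar> \<le> K" "\<bar>I s\<bar> \<le> K" "\<bar>R s\<bar> \<le> K" using bnd[OF s] by auto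
    have Sb: "\<bar>S s\<bar> \<le> 1 + 3 * K" using bs unfolding S_def by auto
    have Xb: "\<bar>A s + I s\<bar> \<le> 2 * K" using bs by auto
    define Pm where "Pm = M * (2 + 8 * K)"
    have Pm0: "Pm \<ge> 0" using M0 K by (simp add: Pm_def)
    have SX: "S s * (A s + I s) \<ge> -Pm"
    proof -
      have "S s * (A s + I s) \<ge> -(M * (2 * K) + (2 * M) * (1 + 3 * K))"
        using lbs Sb Xb M0 by (intro prod_lb) auto
      thus ?thesis unfolding Pm_def by (simp add: algebra_simps)
    qed
    have SX': "S s * (A s + I s) = (1 - A s - I s - R s) * (A s + I s)" by (simp add: S_def)
    have f1: "q * \<beta> * (S s * (A s + I s)) \<ge> -(\<beta> * Pm)"
      using par Pm0 SX by (intro scale_lb) (auto simp: mult_left_le_one_le)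
    have f2: "(1 - q) * \<beta> * (S s * (A s + I s)) \<ge> -(\<beta> * Pm)"
      using par Pm0 SX by (intro scale_lb) (auto simp: mult_left_le_one_le)
    have CM: "C * M = \<beta> * Pm + \<sigma> * M + \<kappa> * M + \<gamma> * M + \<delta> * M + 2 * (lam * M)"
      unfolding C Pm_def by (simp add: algebra_simps)
    have nn: "\<sigma> * M \<ge> 0" "\<kappa> * M \<ge> 0" "\<gamma> * M \<ge> 0" "\<delta> * M \<ge> 0" "lam * M \<ge> 0"
      using par M0 lam by auto
    have gA: "(lam - \<sigma> - \<kappa>) * A s \<ge> -(lam * M)"
      using lam lbs M0 par by (intro scale_lb) auto
    have gI: "(lam - \<gamma>) * I s \<ge> -(lam * M)"
      using lam lbs M0 par by (intro scale_lb) auto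
    have gR: "(lam - \<delta>) * R s \<ge> -(lam * M)"
      using lam lbs M0 par by (intro scale_lb) auto
    have sA: "\<sigma> * A s \<ge> -(\<sigma> * M)" using lbs par M0 by (intro scale_lb) auto
    have kA: "\<kappa> * A s \<ge> -(\<kappa> * M)" using lbs par M0 by (intro scale_lb) auto
    have cI: "\<gamma> * I s \<ge> -(\<gamma> * M)" using lbs par M0 by (intro scale_lb) auto
    have dRl: "\<delta> * R s \<ge> -(\<delta> * M)" using lbs par M0 by (intro scale_lb) auto
    have eA: "dA s + lam * A s = q * \<beta> * (S s * (A s + I s)) + (lam - \<sigma> - \<kappa>) * A s"
      unfolding dA_def SX' by (simp add: algebra_simps)
    have eI: "dI s + lam * I s = (1 - q) * \<beta> * (S s * (A s + I s)) + \<sigma> * A s + (lam - \<gamma>) * I s"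
      unfolding dI_def SX' by (simp add: algebra_simps)
    have eR: "dR s + lam * R s = \<kappa> * A s + \<gamma> * I s + (lam - \<delta>) * R s"
      unfolding dR_def by (simp add: algebra_simps)
    have eS: "dS s + lam * S s = S s * (lam - \<beta> * (A s + I s)) + \<delta> * R s"
      unfolding dS_def dA_def dI_def dR_def S_def by (simp add: algebra_simps)
    have bX: "\<bar>\<beta> * (A s + I s)\<bar> \<le> \<beta> * (2 * K)"
      using Xb par by (simp add: abs_mult mult_left_mono)
    have y0: "lam - \<beta> * (A s + I s) \<ge> 0" and yb: "\<bar>lam - \<beta> * (A s + I s)\<bar> \<le> 2 * lam"
      using bX lam by (auto simp: abs_le_iff)
    have gS: "S s * (lam - \<beta> * (A s + I s)) \<ge> -(M * (2 * lam) + 0 * (1 + 3 * K))"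
      using lbs Sb y0 yb M0 by (intro prod_lb) auto
    have gS': "S s * (lam - \<beta> * (A s + I s)) \<ge> -(2 * (lam * M))" using gS by (simp add: algebra_simps)
    have k1: "dA s + lam * A s \<ge> -(C * M)" using eA f1 gA CM nn by linarith
    have k2: "dI s + lam * I s \<ge> -(C * M)" using eI f2 sA gI CM nn by linarith
    have bP: "\<beta> * Pm \<ge> 0" using par Pm0 by simp
    have k3: "dR s + lam * R s \<ge> -(C * M)" using eR kA cI gR CM nn bP by linarith
    have k4: "dS s + lam * S s \<ge> -(C * M)" using eS gS' dRl CM nn f1 Pm0 par M0 K
    proof -
      have "\<beta> * Pm \<ge> 0" using par Pm0 by simp
      thus ?thesis using eS gS' dRl CM nn by linarith
    qed
    show ?thesis using k1 k2 k3 k4 by blast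
  qed
  have fin: "f t \<ge> - (M / 2)" if der0: "\<And>s. s \<in> {a..b} \<Longrightarrow> (f has_real_derivative f' s) (at s within {a..b})"
    and lb: "\<And>s. s \<in> {a..b} \<Longrightarrow> f' s + lam * f s \<ge> -(C * M)" and fa: "f a \<ge> 0"
    and tt: "t \<in> {a..b}" for f f' t
  proof -
    have C0: "C \<ge> 0" using C par lam K by auto
    have der: "(f has_real_derivative f' s) (at s within {a..t})" if "s \<in> {a..t}" for s
      using der0[of s] that tt by (auto intro: has_field_derivative_subset)
    have "f t \<ge> -3 * (C * M) * (t - a)"
    proof (rule exp_mvt_bound[where f' = f' and lam = lam])
      show "a \<le> t" using tt by auto
      show "lam \<ge> 0" using lam par by linarith
      have "lam * (t - a) \<le> lam * h" using tt ab lam par by (intro mult_left_mono) auto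
      thus "lam * (t - a) \<le> 1" using lam by linarith
      show "\<And>s. s \<in> {a..t} \<Longrightarrow> (f has_real_derivative f' s) (at s within {a..t})" by (rule der)
      show "\<And>s. s \<in> {a..t} \<Longrightarrow> f' s + lam * f s \<ge> -(C * M)" using lb tt by auto
      show "C * M \<ge> 0" using C0 M0 by simp
      show "f a \<ge> 0" by (rule fa)
    qed
    moreover have "3 * (C * M) * (t - a) \<le> 3 * (C * M) * h"
      using tt ab C0 M0 by (intro mult_left_mono) auto
    moreover have "3 * (C * M) * h \<le> M / 2"
    proof -
      have "(6 * C * h) * M \<le> 1 * M" using C M0 by (intro mult_right_mono) auto
      thus ?thesis by (simp add: algebra_simps)
    qed
    ultimately show ?thesis by linarith
  qed
  have half: "neg s \<le> M / 2" if s: "s \<in> {a..b}" for s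
  proof -
    have "A s \<ge> - (M / 2)" by (rule fin[where f=A and f'=dA]) (use derA key s init in \<open>auto\<close>)
    moreover have "I s \<ge> - (M / 2)" by (rule fin[where f=I and f'=dI]) (use derI key s init in \<open>auto\<close>)
    moreover have "R s \<ge> - (M / 2)" by (rule fin[where f=R and f'=dR]) (use derR key s init in \<open>auto\<close>)
    moreover have "S s \<ge> - (M / 2)" by (rule fin[where f=S and f'=dS]) (use derS key s init in \<open>auto simp: S_def\<close>)
    ultimately show ?thesis using M0 unfolding neg_def by auto
  qed
  have "M \<le> M / 2" unfolding M_def using ab half
    by (intro cSup_least) (auto simp: M_def)
  hence "M = 0" using M0 by linarith
  hence "neg t \<le> 0" using negM[OF t] by simp
  thus ?thesis unfolding neg_def S_def by auto
qed



lemma invariance: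
  fixes \<beta> \<sigma> \<kappa> \<gamma> \<delta> q T :: real and A I R :: "real \<Rightarrow> real"
  assumes par: "\<beta> \<ge> 0" "\<sigma> \<ge> 0" "\<kappa> \<ge> 0" "\<gamma> \<ge> 0" "\<delta> \<ge> 0" "0 \<le> q" "q \<le> 1"
    and sol: "sair_solution \<beta> \<sigma> \<kappa> \<gamma> \<delta> q A I R"
    and init: "A 0 \<ge> 0" "I 0 \<ge> 0" "R 0 \<ge> 0" "1 - A 0 - I 0 - R 0 \<ge> 0"
    and T: "T \<ge> 0"
  shows "A T \<ge> 0 \<and> I T \<ge> 0 \<and> R T \<ge> 0 \<and> 1 - A T - I T - R T \<ge> 0"
proof -
  have cont: "continuous_on {0..T} A" "continuous_on {0..T} I" "continuous_on {0..T} R"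
  proof -
    have "\<And>s. s \<in> {0..T} \<Longrightarrow> (\<exists>D. (A has_real_derivative D) (at s within {0..T}))
       \<and> (\<exists>D. (I has_real_derivative D) (at s within {0..T}))
       \<and> (\<exists>D. (R has_real_derivative D) (at s within {0..T}))"
      using sol unfolding sair_solution_def
      by (meson atLeastAtMost_iff atLeast_iff has_field_derivative_subset subsetI)
    then obtain DA DI DR where
      "\<And>s. s \<in> {0..T} \<Longrightarrow> (A has_real_derivative DA s) (at s within {0..T})"
      "\<And>s. s \<in> {0..T} \<Longrightarrow> (I has_real_derivative DI s) (at s within {0..T})"
      "\<And>s. s \<in> {0..T} \<Longrightarrow> (R has_real_derivative DR s) (at s within {0..T})"
      by metis
    thus "continuous_on {0..T} A" "continuous_on {0..T} I" "continuous_on {0..T} R"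
      by (metis DERIV_continuous_on)+
  qed
  have bd: "\<exists>K. \<forall>s\<in>{0..T}. \<bar>f s\<bar> \<le> K" if "continuous_on {0..T} f" for f :: "real \<Rightarrow> real"
  proof -
    have "bounded (f ` {0..T})"
      by (rule compact_imp_bounded[OF compact_continuous_image[OF that compact_Icc]])
    thus ?thesis unfolding bounded_iff by auto
  qed
  obtain KA KI KR where KA: "\<forall>s\<in>{0..T}. \<bar>A s\<bar> \<le> KA" and KI: "\<forall>s\<in>{0..T}. \<bar>I s\<bar> \<le> KI"
    and KR: "\<forall>s\<in>{0..T}. \<bar>R s\<bar> \<le> KR"
    using bd[OF cont(1)] bd[OF cont(2)] bd[OF cont(3)] by blast
  define K where "K = max 0 (max KA (max KI KR))"
  have K0: "K \<ge> 0" by (simp add: K_def)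
  have bnd: "\<bar>A s\<bar> \<le> K \<and> \<bar>I s\<bar> \<le> K \<and> \<bar>R s\<bar> \<le> K" if "s \<in> {0..T}" for s
    using KA KI KR that unfolding K_def by fastforce
  define lam where "lam = \<sigma> + \<kappa> + \<gamma> + \<delta> + 2 * \<beta> * K"
  define C where "C = \<beta> * (2 + 8 * K) + \<sigma> + \<kappa> + \<gamma> + \<delta> + 2 * lam"
  define h where "h = 1 / (6 * C + lam + 1)"
  have lam0: "lam \<ge> 0" using par K0 by (simp add: lam_def)
  have C0: "C \<ge> 0" using par K0 lam0 by (simp add: C_def)
  have hpos: "h > 0" using C0 lam0 by (simp add: h_def)
  have lamh: "lam * h \<le> 1" using C0 lam0 by (simp add: h_def field_simps)
  have Ch: "6 * C * h \<le> 1" using C0 lam0 by (simp add: h_def field_simps)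
  define P where "P s \<longleftrightarrow> A s \<ge> 0 \<and> I s \<ge> 0 \<and> R s \<ge> 0 \<and> 1 - A s - I s - R s \<ge> 0" for s
  have main: "\<forall>s\<in>{0..min T (real n * h)}. P s" for n :: nat
  proof (induction n)
    case 0
    then show ?case using init T by (auto simp: P_def)
  next
    case (Suc n)
    show ?case
    proof
      fix s assume s: "s \<in> {0..min T (real (Suc n) * h)}"
      show "P s"
      proof (cases "s \<le> min T (real n * h)")
        case True then show ?thesis using Suc s by auto
      next
        case False
        define a where "a = min T (real n * h)"
        define b where "b = min T (real (Suc n) * h)"
        have a0: "0 \<le> a" using T hpos by (simp add: a_def)
        have Pa: "P a" using Suc a0 by (simp add: a_def)
        have ab: "a \<le> b" "b \<le> a + h" using hpos
          by (auto simp: a_def b_def min_def algebra_simps)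
        show ?thesis unfolding P_def
        proof (rule local_step[where \<beta>=\<beta> and \<sigma>=\<sigma> and \<kappa>=\<kappa> and \<gamma>=\<gamma> and \<delta>=\<delta> and q=q and A=A and I=I and R=R and t=s and a = a and b = b and h = h and K = K and lam = lam and C = C])
          show "0 \<le> a" "a \<le> b" "b \<le> a + h" by (fact a0 ab)+
          show "K \<ge> 0" by (fact K0)
          show "lam \<ge> \<sigma> + \<kappa>" "lam \<ge> \<gamma>" "lam \<ge> \<delta>" "lam \<ge> 2 * \<beta> * K"
            using par K0 by (auto simp: lam_def)
          show "lam * h \<le> 1" by (fact lamh)
          show "C = \<beta> * (2 + 8 * K) + \<sigma> + \<kappa> + \<gamma> + \<delta> + 2 * lam" by (simp add: C_def)
          show "6 * C * h \<le> 1" by (fact Ch)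
          show "\<And>t. t \<in> {a..b} \<Longrightarrow> \<bar>A t\<bar> \<le> K \<and> \<bar>I t\<bar> \<le> K \<and> \<bar>R t\<bar> \<le> K"
            using bnd a0 by (auto simp: b_def)
          show "A a \<ge> 0" "I a \<ge> 0" "R a \<ge> 0" "1 - A a - I a - R a \<ge> 0" using Pa by (auto simp: P_def)
          show "s \<in> {a..b}" using s False by (simp add: a_def b_def)
        qed (use par sol in auto)
      qed
    qed
  qed
  obtain n :: nat where "T < real n * h" using reals_Archimedean3[OF hpos] by blast
  hence "T \<in> {0..min T (real n * h)}" using T by auto
  thus ?thesis using main[of n] by (auto simp: P_def)
qed



lemma vec_aux:
  fixes a b c d k g \<delta> :: real
  assumes "b \<ge> 0" "c \<ge> 0" "d < 0" "a * d - b * c > 0" "k \<ge> 0" "g \<ge> 0" "\<delta> > 0"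
  shows "\<exists>v1 v2 v3 mu. v1 > 0 \<and> v2 > 0 \<and> v3 > 0 \<and> mu > 0 \<and>
     v1 * a + v2 * c + v3 * k \<le> - mu * v1 \<and> v1 * b + v2 * d + v3 * g \<le> - mu * v2 \<and>
     - (v3 * \<delta>) \<le> - mu * v3"
proof -
  define D where "D = a * d - b * c"
  define e where "e = D / (c + 1)"
  define v1 where "v1 = - d"
  define v2 where "v2 = b + e"
  define w1 where "w1 = v1 * a + v2 * c"
  define w2 where "w2 = v1 * b + v2 * d"
  have D0: "D > 0" using assms by (simp add: D_def)
  have e0: "e > 0" using D0 assms by (simp add: e_def)
  have v1: "v1 > 0" using assms by (simp add: v1_def)
  have v2: "v2 > 0" using assms e0 by (simp add: v2_def)
  have w1e: "w1 = - D / (c + 1)"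
    using assms by (simp add: w1_def v1_def v2_def e_def D_def field_simps)
  have w1: "w1 < 0" using D0 assms by (simp add: w1e divide_neg_pos)
  have w2e: "w2 = e * d" by (simp add: w2_def v1_def v2_def algebra_simps)
  have w2: "w2 < 0" using e0 assms by (simp add: w2e mult_pos_neg)
  define v3 where "v3 = min (- w1 / (2 * (k + 1))) (- w2 / (2 * (g + 1)))"
  have v3: "v3 > 0" using w1 w2 assms by (simp add: v3_def divide_neg_pos)
  have v3k: "v3 * k \<le> - w1 / 2"
  proof -
    have "v3 * k \<le> (- w1 / (2 * (k + 1))) * k" using assms v3 by (intro mult_right_mono) (auto simp: v3_def)
    also have "\<dots> \<le> - w1 / 2" using w1 assms by (simp add: field_simps)
    finally show ?thesis .
  qed
  have v3g: "v3 * g \<le> - w2 / 2"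
  proof -
    have "v3 * g \<le> (- w2 / (2 * (g + 1))) * g" using assms v3 by (intro mult_right_mono) (auto simp: v3_def)
    also have "\<dots> \<le> - w2 / 2" using w2 assms by (simp add: field_simps)
    finally show ?thesis .
  qed
  define mu where "mu = min (min (- w1 / (2 * v1)) (- w2 / (2 * v2))) \<delta>"
  have mu: "mu > 0" using w1 w2 v1 v2 assms by (simp add: mu_def divide_neg_pos)
  have m1: "mu * v1 \<le> - w1 / 2"
  proof -
    have "mu * v1 \<le> (- w1 / (2 * v1)) * v1" using v1 by (intro mult_right_mono) (auto simp: mu_def)
    thus ?thesis using v1 by simp
  qed
  have m2: "mu * v2 \<le> - w2 / 2"
  proof -
    have "mu * v2 \<le> (- w2 / (2 * v2)) * v2" using v2 by (intro mult_right_mono) (auto simp: mu_def)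
    thus ?thesis using v2 by simp
  qed
  have m3: "mu * v3 \<le> \<delta> * v3" using v3 by (intro mult_right_mono) (auto simp: mu_def)
  show ?thesis
    apply (rule exI[of _ v1], rule exI[of _ v2], rule exI[of _ v3], rule exI[of _ mu])
    using v1 v2 v3 mu v3k v3g m1 m2 m3 w1_def w2_def by (auto simp: mult.commute)
qed



theorem proposition1:
  fixes \<beta> \<sigma> \<kappa> \<gamma> \<delta> q :: real
  assumes "\<beta> \<ge> 0" and "\<sigma> \<ge> 0" and "\<kappa> \<ge> 0" and "\<gamma> > 0" and "\<kappa> + \<sigma> > 0" and "\<delta> > 0"
    and "0 \<le> q" and "q \<le> 1"
    and "sair_R0 \<beta> \<sigma> \<kappa> \<gamma> q < 1"
  shows
    "(\<forall>\<epsilon>>0. \<exists>d>0. \<forall>A I R. sair_solution \<beta> \<sigma> \<kappa> \<gamma> \<delta> q A I R \<and> (A 0, I 0, R 0) \<in> sair_Omega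
         \<and> norm (A 0, I 0, R 0) < d \<longrightarrow> (\<forall>t\<ge>0. norm (A t, I t, R t) < \<epsilon>))
     \<and>
     (\<forall>A I R. sair_solution \<beta> \<sigma> \<kappa> \<gamma> \<delta> q A I R \<and> (A 0, I 0, R 0) \<in> sair_Omega \<longrightarrow>
         ((\<lambda>t. (A t, I t, R t)) \<longlongrightarrow> (0, 0, 0)) at_top)"
proof -
  note par = assms(1-8)
  define a where "a = q * \<beta> - \<sigma> - \<kappa>"
  define b where "b = q * \<beta>"
  define c where "c = (1 - q) * \<beta> + \<sigma>"
  define d where "d = (1 - q) * \<beta> - \<gamma>"
  have r1: "\<beta> / (\<kappa> + \<gamma> + \<sigma>) < 1"
    and r2: "\<beta> * (q * \<gamma> + (1 - q) * \<kappa> + \<sigma>) / (\<gamma> * (\<kappa> + \<sigma>)) < 1"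
    using assms(9) unfolding sair_R0_def by auto
  have tr: "\<beta> < \<kappa> + \<gamma> + \<sigma>" using r1 par by (simp add: divide_less_eq)
  have dt: "\<beta> * (q * \<gamma> + (1 - q) * \<kappa> + \<sigma>) < \<gamma> * (\<kappa> + \<sigma>)"
    using r2 par by (simp add: divide_less_eq)
  have det: "a * d - b * c = \<gamma> * (\<kappa> + \<sigma>) - \<beta> * (q * \<gamma> + (1 - q) * \<kappa> + \<sigma>)"
    unfolding a_def b_def c_def d_def by (simp add: algebra_simps)
  have det0: "a * d - b * c > 0" using det dt by simp
  have b0: "b \<ge> 0" using par by (simp add: b_def)
  have c0: "c \<ge> 0" using par by (simp add: c_def)
  have bc0: "b * c \<ge> 0" using b0 c0 by simp
  have d0: "d < 0"
  proof (rule ccontr)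
    assume "\<not> d < 0"
    hence "d \<ge> 0" by simp
    moreover have "a + d < 0" using tr unfolding a_def d_def by (simp add: algebra_simps)
    ultimately have "a < 0" by linarith
    hence "a * d \<le> 0" using \<open>d \<ge> 0\<close> by (simp add: mult_nonpos_nonneg)
    thus False using det0 bc0 by linarith
  qed
  obtain v1 v2 v3 mu where v: "v1 > 0" "v2 > 0" "v3 > 0" "mu > 0"
    and c1: "v1 * a + v2 * c + v3 * \<kappa> \<le> - mu * v1"
    and c2: "v1 * b + v2 * d + v3 * \<gamma> \<le> - mu * v2"
    and c3: "- (v3 * \<delta>) \<le> - mu * v3"
    using vec_aux[OF b0 c0 d0 det0 par(3) less_imp_le[OF par(4)] par(6)] by blast
  define m where "m = min v1 (min v2 v3)"
  define V where "V = v1 + v2 + v3"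
  have m0: "m > 0" using v by (simp add: m_def)
  have V0: "V > 0" using v by (simp add: V_def)
  have core: "0 \<le> A t \<and> 0 \<le> I t \<and> 0 \<le> R t \<and> norm (A t, I t, R t) \<le> A t + I t + R t \<and>
      A t + I t + R t \<le> V * norm (A 0, I 0, R 0) / m * exp (- mu * t)"
    if sol: "sair_solution \<beta> \<sigma> \<kappa> \<gamma> \<delta> q A I R" and om: "(A 0, I 0, R 0) \<in> sair_Omega"
      and t: "t \<ge> 0" for A I R t
  proof -
    have inv: "A s \<ge> 0 \<and> I s \<ge> 0 \<and> R s \<ge> 0 \<and> 1 - A s - I s - R s \<ge> 0" if "s \<ge> 0" for s
      using invariance[OF par(1,2,3) less_imp_le[OF par(4)] less_imp_le[OF par(6)] par(7,8) sol _ _ _ _ that]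
        om unfolding sair_Omega_def by auto
    define W where "W s = v1 * A s + v2 * I s + v3 * R s" for s
    define dA where "dA t = q * \<beta> * (1 - A t - I t - R t) * (A t + I t) - \<sigma> * A t - \<kappa> * A t" for t
    define dI where "dI t = (1 - q) * \<beta> * (1 - A t - I t - R t) * (A t + I t) + \<sigma> * A t - \<gamma> * I t" for t
    define dR where "dR t = \<kappa> * A t + \<gamma> * I t - \<delta> * R t" for t
    define dW where "dW s = v1 * dA s + v2 * dI s + v3 * dR s" for s
    have derW: "(W has_real_derivative dW s) (at s within {0..})" if "s \<ge> 0" for s
    proof -
      have "(A has_real_derivative dA s) (at s within {0..})"
        "(I has_real_derivative dI s) (at s within {0..})"
        "(R has_real_derivative dR s) (at s within {0..})"
        using sol that unfolding sair_solution_def dA_def dI_def dR_def by auto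
      thus ?thesis unfolding W_def dW_def by (auto intro!: derivative_eq_intros)
    qed
    have dWle: "dW s \<le> - mu * W s" if s: "s \<ge> 0" for s
    proof -
      obtain x y z where xyz: "x = A s" "y = I s" "z = R s" by blast
      have nn: "x \<ge> 0" "y \<ge> 0" "z \<ge> 0" using inv[OF s] xyz by auto
      have eq: "dW s = (v1 * a + v2 * c + v3 * \<kappa>) * x + (v1 * b + v2 * d + v3 * \<gamma>) * y - (v3 * \<delta>) * z
          - (v1 * q + v2 * (1 - q)) * \<beta> * ((x + y + z) * (x + y))"
        unfolding dW_def dA_def dI_def dR_def a_def b_def c_def d_def xyz by (simp add: algebra_simps)
      have p: "(v1 * q + v2 * (1 - q)) * \<beta> * ((x + y + z) * (x + y)) \<ge> 0"
        using nn v par by simp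
      have e1: "(v1 * a + v2 * c + v3 * \<kappa>) * x \<le> (- mu * v1) * x" using c1 nn by (intro mult_right_mono)
      have e2: "(v1 * b + v2 * d + v3 * \<gamma>) * y \<le> (- mu * v2) * y" using c2 nn by (intro mult_right_mono)
      have e3: "(- (v3 * \<delta>)) * z \<le> (- mu * v3) * z" using c3 nn by (intro mult_right_mono)
      have "W s = v1 * x + v2 * y + v3 * z" by (simp add: W_def xyz)
      thus ?thesis using eq p e1 e2 e3 by (simp add: algebra_simps)
    qed
    have Wt: "W t \<le> W 0 * exp (- mu * t)" by (rule decay[OF t derW dWle])
    have nn: "A t \<ge> 0" "I t \<ge> 0" "R t \<ge> 0" using inv[OF t] by auto
    have nn0: "A 0 \<ge> 0" "I 0 \<ge> 0" "R 0 \<ge> 0" using inv[of 0] by auto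
    have normle: "norm (A t, I t, R t) \<le> A t + I t + R t"
    proof -
      have "norm (A t, I t, R t) \<le> norm (A t) + norm (I t, R t)" by (rule norm_Pair_le)
      also have "\<dots> \<le> norm (A t) + (norm (I t) + norm (R t))" using norm_Pair_le[of "I t" "R t"] by simp
      finally show ?thesis using nn by simp
    qed
    have mle: "m * (A t + I t + R t) \<le> W t"
    proof -
      have "m * A t \<le> v1 * A t" "m * I t \<le> v2 * I t" "m * R t \<le> v3 * R t"
        using nn by (auto intro!: mult_right_mono simp: m_def)
      thus ?thesis by (simp add: W_def algebra_simps)
    qed
    have W0: "W 0 \<le> V * norm (A 0, I 0, R 0)"
    proof -
      have n1: "A 0 \<le> norm (A 0, I 0, R 0)" using norm_fst_le[of "A 0" "(I 0, R 0)"] nn0 by simp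
      have n23: "norm (I 0, R 0) \<le> norm (A 0, I 0, R 0)" by (rule norm_snd_le)
      have n2: "I 0 \<le> norm (A 0, I 0, R 0)" using norm_fst_le[of "I 0" "R 0"] nn0 n23 by simp
      have n3: "R 0 \<le> norm (A 0, I 0, R 0)" using norm_snd_le[of "R 0" "I 0"] nn0 n23 by simp
      have "v1 * A 0 \<le> v1 * norm (A 0, I 0, R 0)" "v2 * I 0 \<le> v2 * norm (A 0, I 0, R 0)"
        "v3 * R 0 \<le> v3 * norm (A 0, I 0, R 0)" using n1 n2 n3 v by auto
      thus ?thesis by (simp add: W_def V_def algebra_simps)
    qed
    have "m * (A t + I t + R t) \<le> V * norm (A 0, I 0, R 0) * exp (- mu * t)"
      using mle Wt W0 by (smt (verit) exp_gt_zero mult_right_mono)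
    hence "A t + I t + R t \<le> V * norm (A 0, I 0, R 0) / m * exp (- mu * t)"
      using m0 by (simp add: field_simps)
    thus ?thesis using nn normle by simp
  qed
  have expl: "((\<lambda>t. exp (- mu * t)) \<longlongrightarrow> 0) at_top"
    by (intro filterlim_compose[OF exp_at_bot] filterlim_tendsto_neg_mult_at_bot[OF tendsto_const]
        filterlim_ident) (use v in auto)
  show ?thesis
  proof (intro conjI allI impI)
    fix \<epsilon> :: real assume e: "\<epsilon> > 0"
    show "\<exists>d>0. \<forall>A I R. sair_solution \<beta> \<sigma> \<kappa> \<gamma> \<delta> q A I R \<and> (A 0, I 0, R 0) \<in> sair_Omega
         \<and> norm (A 0, I 0, R 0) < d \<longrightarrow> (\<forall>t\<ge>0. norm (A t, I t, R t) < \<epsilon>)"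
    proof (intro exI[of _ "\<epsilon> * m / V"] conjI allI impI)
      show "\<epsilon> * m / V > 0" using e m0 V0 by simp
      fix A I R t
      assume H: "sair_solution \<beta> \<sigma> \<kappa> \<gamma> \<delta> q A I R \<and> (A 0, I 0, R 0) \<in> sair_Omega
         \<and> norm (A 0, I 0, R 0) < \<epsilon> * m / V" and t: "(t::real) \<ge> 0"
      have C: "norm (A t, I t, R t) \<le> V * norm (A 0, I 0, R 0) / m * exp (- mu * t)"
        using core[of A I R t] H t by linarith
      have "exp (- mu * t) \<le> 1" using v t by simp
      hence "V * norm (A 0, I 0, R 0) / m * exp (- mu * t) \<le> V * norm (A 0, I 0, R 0) / m"
        using V0 m0 by (intro mult_left_le) auto
      also have "\<dots> < \<epsilon>" using H V0 m0 by (simp add: field_simps)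
      finally show "norm (A t, I t, R t) < \<epsilon>" using C by linarith
    qed
  next
    fix A I R
    assume H: "sair_solution \<beta> \<sigma> \<kappa> \<gamma> \<delta> q A I R \<and> (A 0, I 0, R 0) \<in> sair_Omega"
    define g where "g t = V * norm (A 0, I 0, R 0) / m * exp (- mu * t)" for t
    have "((\<lambda>t. (V * norm (A 0, I 0, R 0) / m) * exp (- mu * t)) \<longlongrightarrow> (V * norm (A 0, I 0, R 0) / m) * 0) at_top"
      by (rule tendsto_mult[OF tendsto_const expl])
    hence g0: "(g \<longlongrightarrow> 0) at_top" unfolding g_def by simp
    have ev: "eventually (\<lambda>t. 0 \<le> A t \<and> 0 \<le> I t \<and> 0 \<le> R t \<and> A t + I t + R t \<le> g t) at_top"
      unfolding eventually_at_top_linorder g_def using core H by blast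
    have lim: "(f \<longlongrightarrow> 0) at_top" if "eventually (\<lambda>t. 0 \<le> f t \<and> f t \<le> g t) at_top" for f :: "real \<Rightarrow> real"
      by (rule tendsto_sandwich[OF _ _ tendsto_const g0]) (use that in \<open>auto elim: eventually_mono\<close>)
    have "(A \<longlongrightarrow> 0) at_top" by (rule lim) (use ev in \<open>auto elim!: eventually_mono\<close>)
    moreover have "(I \<longlongrightarrow> 0) at_top" by (rule lim) (use ev in \<open>auto elim!: eventually_mono\<close>)
    moreover have "(R \<longlongrightarrow> 0) at_top" by (rule lim) (use ev in \<open>auto elim!: eventually_mono\<close>)
    ultimately show "((\<lambda>t. (A t, I t, R t)) \<longlongrightarrow> (0, 0, 0)) at_top"
      by (intro tendsto_Pair)
  qed
qed


end
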